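(* Let $F$ be $L$-periodic and infinitely differentiable. Then for every fixed $i\ge1$ and $j\ge1$, $$I\big(c^{(N)}_{ij}\big)=\limsup_{N\to\infty}\frac{\ln|c^{(N)}_{ij}|}{\ln N}\le\frac{j-1}{2}.$$
   Context: Let $N\ge2$, $L>0$, $\Delta=L/N$, $x_i=(i-1)L/N$, indices modulo $N$. Discrete derivatives act on the index $i$: $(\nabla^+g)(i)=g(i+1)-g(i)$, $(\nabla^-g)(i)=g(i)-g(i-1)$. Let $d_m=(-1)^m(m+1)$. Define $c^{(N)}_{i1}=F(x_i)$, $c^{(N)}_{i2}=0$, and for $j\ge3$ $$c_{ij}=-\sum_{m=1}^{\lfloor (j-1)/2\rfloor}\ \sum_{j_1+\dots+j_m=j-m-1}\frac{d_m}{j}\Delta^{-2-m}\,\nabla^-\!\Big(\prod_{p=1}^m\frac{\nabla^+c_{i,j_p}}{j_p+1}\Big)+\sum_{k=1}^{\lfloor (j-1)/2\rfloor}\ \sum_{j_1+\dots+j_k=j-k-1}\frac{1}{j\,k!}F^{(k)}(x_i)\prod_{p=1}^k\frac{c_{i,j_p}}{j_p+1},$$ inner sums over ordered tuples of positive integers. (These are the Taylor coefficients at $t=0$ of the velocities $v_i$ for the system $\ddot x_i=(x_i-x_{i-1})^{-2}-(x_{i+1}-x_i)^{-2}+F(x_i)$ on the circle of length $L$ with $x_i(0)=(i-1)L/N$, $\dot x_i(0)=0$.) *)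

theory Defs
  imports "HOL-Analysis.Analysis"
begin

definition smooth_real :: "(real \<Rightarrow> real) \<Rightarrow> bool" where
  "smooth_real F \<longleftrightarrow> (\<forall>k x. ((deriv ^^ k) F) differentiable (at x))"

definition xpt :: "real \<Rightarrow> nat \<Rightarrow> int \<Rightarrow> real" where
  "xpt L N i = real_of_int ((i - 1) mod int N) * L / real N"

definition nabla_plus :: "(int \<Rightarrow> real) \<Rightarrow> int \<Rightarrow> real" where
  "nabla_plus g i = g (i + 1) - g i"

definition nabla_minus :: "(int \<Rightarrow> real) \<Rightarrow> int \<Rightarrow> real" where
  "nabla_minus g i = g i - g (i - 1)"

definition dcoef :: "nat \<Rightarrow> real" where
  "dcoef m = (-1) ^ m * (real m + 1)"

definition tuples :: "nat \<Rightarrow> nat \<Rightarrow> nat list set" where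
  "tuples m s = {js. length js = m \<and> (\<forall>p\<in>set js. 0 < p) \<and> sum_list js = s}"

text \<open>One step of the recursion: computes c_{.,j} from the previously computed
  columns g j' (j' < j). Index j = 0 is unused.\<close>
definition cstep :: "(real \<Rightarrow> real) \<Rightarrow> real \<Rightarrow> nat \<Rightarrow> nat \<Rightarrow> (nat \<Rightarrow> int \<Rightarrow> real) \<Rightarrow> int \<Rightarrow> real" where
  "cstep F L N j g i =
    (if j = 0 then 0
     else if j = 1 then F (xpt L N i)
     else if j = 2 then 0
     else
       - (\<Sum>m = 1..(j - 1) div 2. \<Sum>js \<in> tuples m (j - m - 1).
            dcoef m / real j * (L / real N) powi (- 2 - int m) *
            nabla_minus (\<lambda>i'. \<Prod>p<m. nabla_plus (g (js ! p)) i' / (real (js ! p) + 1)) i)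
       + (\<Sum>k = 1..(j - 1) div 2. \<Sum>js \<in> tuples k (j - k - 1).
            1 / (real j * fact k) * (deriv ^^ k) F (xpt L N i) *
            (\<Prod>p<k. g (js ! p) i / (real (js ! p) + 1))))"

primrec ctab :: "(real \<Rightarrow> real) \<Rightarrow> real \<Rightarrow> nat \<Rightarrow> nat \<Rightarrow> nat \<Rightarrow> int \<Rightarrow> real" where
  "ctab F L N 0 = (\<lambda>_ _. 0)"
| "ctab F L N (Suc n) = (ctab F L N n)(n := cstep F L N n (ctab F L N n))"

definition ccoef :: "(real \<Rightarrow> real) \<Rightarrow> real \<Rightarrow> nat \<Rightarrow> int \<Rightarrow> nat \<Rightarrow> real" where
  "ccoef F L N i j = ctab F L N (Suc j) j i"

end

theory Submission
  imports Defs
begin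


definition Bd :: "nat \<Rightarrow> real \<Rightarrow> (nat \<Rightarrow> int \<Rightarrow> real) \<Rightarrow> bool" where
  "Bd s a g \<longleftrightarrow> (\<exists>C. \<forall>N\<ge>1. \<forall>i. \<bar>(nabla_plus ^^ s) (g N) i\<bar> \<le> C * real N powr (a - real s))"

definition Good :: "real \<Rightarrow> (nat \<Rightarrow> int \<Rightarrow> real) \<Rightarrow> bool" where
  "Good a g \<longleftrightarrow> (\<forall>s. Bd s a g)"

lemma nabla_add: "nabla_plus (\<lambda>i. u i + v i) = (\<lambda>i. nabla_plus u i + nabla_plus v i)"
  by (auto simp: nabla_plus_def)

lemma nablas_add: "(nabla_plus ^^ s) (\<lambda>i. u i + v i) = (\<lambda>i. (nabla_plus ^^ s) u i + (nabla_plus ^^ s) v i)"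
  by (induction s) (auto simp: nabla_add)

lemma nablas_scale: "(nabla_plus ^^ s) (\<lambda>i. c * v i) = (\<lambda>i. c * (nabla_plus ^^ s) v i)"
  by (induction s) (auto simp: nabla_plus_def algebra_simps)

lemma nablas_shift: "(nabla_plus ^^ s) (\<lambda>i. v (i + d)) = (\<lambda>i. (nabla_plus ^^ s) v (i + d))"
  by (induction s) (auto simp: nabla_plus_def algebra_simps)

lemma nablas_const: "(nabla_plus ^^ s) (\<lambda>i. c) = (\<lambda>i. if s = 0 then c else 0)"
  by (induction s) (auto simp: nabla_plus_def)

lemma Bd_C_nonneg:
  assumes "\<forall>N\<ge>1. \<forall>i::int. \<bar>x N i :: real\<bar> \<le> C * real N powr e"
  shows "C \<ge> 0"
proof -
  have "0 \<le> C * real (1::nat) powr e" using assms[rule_format, of 1 0] by linarith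
  then show ?thesis by simp
qed

lemma Bd_add: "Bd s a g \<Longrightarrow> Bd s a h \<Longrightarrow> Bd s a (\<lambda>N i. g N i + h N i)"
  unfolding Bd_def nablas_add
proof (elim exE)
  fix C1 C2 assume 1: "\<forall>N\<ge>1. \<forall>i. \<bar>(nabla_plus ^^ s) (g N) i\<bar> \<le> C1 * real N powr (a - real s)"
    and 2: "\<forall>N\<ge>1. \<forall>i. \<bar>(nabla_plus ^^ s) (h N) i\<bar> \<le> C2 * real N powr (a - real s)"
  show "\<exists>C. \<forall>N\<ge>1. \<forall>i. \<bar>(nabla_plus ^^ s) (g N) i + (nabla_plus ^^ s) (h N) i\<bar> \<le> C * real N powr (a - real s)"
  proof (intro exI allI impI)
    fix N i assume "(1::nat) \<le> N"
    then show "\<bar>(nabla_plus ^^ s) (g N) i + (nabla_plus ^^ s) (h N) i\<bar> \<le> (C1 + C2) * real N powr (a - real s)"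
      using 1 2 by (smt (verit, best) distrib_right)
  qed
qed

lemma Bd_scale:
  assumes "\<forall>N\<ge>1. \<bar>c N\<bar> \<le> K * real N powr e" "Bd s a g"
  shows "Bd s (a + e) (\<lambda>N i. c N * g N i)"
proof -
  from assms(2) obtain C where C: "\<forall>N\<ge>1. \<forall>i. \<bar>(nabla_plus ^^ s) (g N) i\<bar> \<le> C * real N powr (a - real s)"
    unfolding Bd_def by blast
  have "\<forall>N\<ge>1. \<forall>i. \<bar>(nabla_plus ^^ s) (\<lambda>i. c N * g N i) i\<bar> \<le> (K * C) * real N powr (a + e - real s)"
  proof (intro allI impI)
    fix N :: nat and i assume N: "1 \<le> N"
    have "\<bar>(nabla_plus ^^ s) (\<lambda>i. c N * g N i) i\<bar> = \<bar>c N\<bar> * \<bar>(nabla_plus ^^ s) (g N) i\<bar>"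
      by (simp add: nablas_scale abs_mult)
    also have "\<dots> \<le> (K * real N powr e) * (C * real N powr (a - real s))"
      using assms(1) C N by (intro mult_mono) auto
    also have "\<dots> = (K * C) * real N powr (a + e - real s)"
      using N by (simp add: powr_add[symmetric] algebra_simps)
    finally show "\<bar>(nabla_plus ^^ s) (\<lambda>i. c N * g N i) i\<bar> \<le> (K * C) * real N powr (a + e - real s)" .
  qed
  then show ?thesis unfolding Bd_def by blast
qed

lemma Bd_shift: "Bd s a g \<Longrightarrow> Bd s a (\<lambda>N i. g N (i + d))"
  unfolding Bd_def nablas_shift by blast

lemma Bd_nabla: "Bd (Suc s) a g \<longleftrightarrow> Bd s (a - 1) (\<lambda>N. nabla_plus (g N))"
  unfolding Bd_def funpow_Suc_right by (simp add: algebra_simps)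

lemma Bd_mono: "a \<le> b \<Longrightarrow> Bd s a g \<Longrightarrow> Bd s b g"
  unfolding Bd_def
proof (elim exE)
  fix C assume ab: "a \<le> b" and C: "\<forall>N\<ge>1. \<forall>i. \<bar>(nabla_plus ^^ s) (g N) i\<bar> \<le> C * real N powr (a - real s)"
  have C0: "C \<ge> 0" by (rule Bd_C_nonneg[OF C])
  show "\<exists>C. \<forall>N\<ge>1. \<forall>i. \<bar>(nabla_plus ^^ s) (g N) i\<bar> \<le> C * real N powr (b - real s)"
  proof (intro exI allI impI)
    fix N :: nat and i assume N: "1 \<le> N"
    have "real N powr (a - real s) \<le> real N powr (b - real s)"
      using N ab by (intro powr_mono) auto
    then show "\<bar>(nabla_plus ^^ s) (g N) i\<bar> \<le> C * real N powr (b - real s)"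
      using C N C0 by (meson mult_left_mono order_trans)
  qed
qed

lemma Good_mono: "a \<le> b \<Longrightarrow> Good a g \<Longrightarrow> Good b g"
  unfolding Good_def using Bd_mono by blast
lemma Good_add: "Good a g \<Longrightarrow> Good a h \<Longrightarrow> Good a (\<lambda>N i. g N i + h N i)"
  unfolding Good_def using Bd_add by blast
lemma Good_scale: "\<forall>N\<ge>1. \<bar>c N\<bar> \<le> K * real N powr e \<Longrightarrow> Good a g \<Longrightarrow> Good (a + e) (\<lambda>N i. c N * g N i)"
  unfolding Good_def using Bd_scale by blast
lemma Good_cscale: "Good a g \<Longrightarrow> Good a (\<lambda>N i. c * g N i)"
  using Good_scale[of "\<lambda>_. c" "\<bar>c\<bar>" 0 a g] by simp
lemma Good_shift: "Good a g \<Longrightarrow> Good a (\<lambda>N i. g N (i + d))"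
  unfolding Good_def using Bd_shift by blast
lemma Good_nabla: "Good a g \<Longrightarrow> Good (a - 1) (\<lambda>N. nabla_plus (g N))"
  unfolding Good_def using Bd_nabla by blast
lemma Good_nabla_minus: "Good a g \<Longrightarrow> Good (a - 1) (\<lambda>N. nabla_minus (g N))"
proof -
  assume "Good a g"
  then have "Good (a - 1) (\<lambda>N i. nabla_plus (g N) (i + (-1)))" by (intro Good_shift Good_nabla)
  moreover have "(\<lambda>N i. nabla_plus (g N) (i + (-1))) = (\<lambda>N. nabla_minus (g N))"
    by (auto simp: nabla_plus_def nabla_minus_def fun_eq_iff)
  ultimately show ?thesis by simp
qed

lemma nablas_zero: "(nabla_plus ^^ s) (\<lambda>i. 0) = (\<lambda>i. 0)"
  by (induction s) (auto simp: nabla_plus_def)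

lemma Good_zero: "Good a (\<lambda>N i. 0)"
  unfolding Good_def Bd_def nablas_zero by (intro allI exI[of _ 0]) simp

lemma Good_one: "Good 0 (\<lambda>N i. 1)"
  unfolding Good_def Bd_def
proof
  fix s show "\<exists>C. \<forall>N\<ge>1. \<forall>i. \<bar>(nabla_plus ^^ s) (\<lambda>i. 1) i\<bar> \<le> C * real N powr (0 - real s)"
  proof (cases s)
    case 0 then show ?thesis by (intro exI[of _ 1]) simp
  next
    case (Suc t) then show ?thesis by (intro exI[of _ 0]) (simp add: nablas_const nabla_plus_def)
  qed
qed



lemma nabla_mult: "nabla_plus (\<lambda>i. u i * v i) = (\<lambda>i. u (i + 1) * nabla_plus v i + nabla_plus u i * v i)"
  by (auto simp: nabla_plus_def fun_eq_iff algebra_simps)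

lemma Bd_mult_aux:
  "\<forall>a b g h. (\<forall>s\<le>r. Bd s a g) \<longrightarrow> (\<forall>s\<le>r. Bd s b h) \<longrightarrow> Bd r (a + b) (\<lambda>N i. g N i * h N i)"
proof (induction r)
  case 0
  show ?case
  proof (intro allI impI)
    fix a b g h assume "\<forall>s\<le>0. Bd s a g" "\<forall>s\<le>0. Bd s b h"
    then obtain C1 C2 where 1: "\<forall>N\<ge>1. \<forall>i. \<bar>g N i\<bar> \<le> C1 * real N powr a"
      and 2: "\<forall>N\<ge>1. \<forall>i. \<bar>h N i\<bar> \<le> C2 * real N powr b" unfolding Bd_def by auto
    have "\<forall>N\<ge>1. \<forall>i. \<bar>g N i * h N i\<bar> \<le> (C1 * C2) * real N powr (a + b)"
    proof (intro allI impI)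
      fix N :: nat and i assume N: "1 \<le> N"
      have g1: "\<bar>g N i\<bar> \<le> C1 * real N powr a" and h1: "\<bar>h N i\<bar> \<le> C2 * real N powr b" using 1 2 N by auto
      have "0 \<le> C1 * real N powr a" using g1 abs_ge_zero order_trans by blast
      then have "\<bar>g N i * h N i\<bar> \<le> (C1 * real N powr a) * (C2 * real N powr b)"
        unfolding abs_mult using g1 h1 by (intro mult_mono) auto
      also have "\<dots> = (C1 * C2) * real N powr (a + b)" using N by (simp add: powr_add)
      finally show "\<bar>g N i * h N i\<bar> \<le> (C1 * C2) * real N powr (a + b)" .
    qed
    then show "Bd 0 (a + b) (\<lambda>N i. g N i * h N i)" unfolding Bd_def by auto
  qed
next
  case (Suc r)
  show ?case
  proof (intro allI impI)
    fix a b g h assume G: "\<forall>s\<le>Suc r. Bd s a g" and H: "\<forall>s\<le>Suc r. Bd s b h"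
    have G1: "\<forall>s\<le>r. Bd s a (\<lambda>N i. g N (i + 1))" using G Bd_shift by auto
    have H1: "\<forall>s\<le>r. Bd s (b - 1) (\<lambda>N. nabla_plus (h N))" using H Bd_nabla by auto
    have G2: "\<forall>s\<le>r. Bd s (a - 1) (\<lambda>N. nabla_plus (g N))" using G Bd_nabla by auto
    have H2: "\<forall>s\<le>r. Bd s b h" using H by auto
    have T1: "Bd r (a + (b - 1)) (\<lambda>N i. g N (i + 1) * nabla_plus (h N) i)"
      using Suc.IH G1 H1 by blast
    have T2: "Bd r (a - 1 + b) (\<lambda>N i. nabla_plus (g N) i * h N i)"
      using Suc.IH G2 H2 by blast
    have "Bd r (a + b - 1) (\<lambda>N i. g N (i + 1) * nabla_plus (h N) i + nabla_plus (g N) i * h N i)"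
    proof -
      have e1: "a + (b - 1) = a + b - 1" and e2: "a - 1 + b = a + b - 1" by simp_all
      show ?thesis using Bd_add[OF T1[unfolded e1] T2[unfolded e2]] .
    qed
    then have "Bd r (a + b - 1) (\<lambda>N. nabla_plus (\<lambda>i. g N i * h N i))"
      by (simp add: nabla_mult)
    then show "Bd (Suc r) (a + b) (\<lambda>N i. g N i * h N i)" using Bd_nabla by blast
  qed
qed

lemma Good_mult: "Good a g \<Longrightarrow> Good b h \<Longrightarrow> Good (a + b) (\<lambda>N i. g N i * h N i)"
  unfolding Good_def using Bd_mult_aux by blast

lemma Good_prod: fixes m :: nat shows "(\<And>p. p < m \<Longrightarrow> Good (a p) (f p)) \<Longrightarrow> Good (\<Sum>p<m. a p) (\<lambda>N i. \<Prod>p<m. f p N i)"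
proof (induction m)
  case 0 then show ?case using Good_one by simp
next
  case (Suc m)
  have "Good ((\<Sum>p<m. a p) + a m) (\<lambda>N i. (\<Prod>p<m. f p N i) * f m N i)"
    using Suc by (intro Good_mult) auto
  then show ?case by simp
qed

lemma Good_sum:
  assumes "\<And>x. x \<in> A \<Longrightarrow> Good a (f x)"
  shows "Good a (\<lambda>N i. \<Sum>x\<in>A. f x N i)"
proof (cases "finite A")
  case True
  then show ?thesis using assms
  proof (induction A rule: finite_induct)
    case empty then show ?case using Good_zero by simp
  next
    case (insert x F) then show ?case using Good_add[of a "f x" "\<lambda>N i. \<Sum>x\<in>F. f x N i"] by simp
  qed
next
  case False then show ?thesis using Good_zero by simp
qed



fun Dd :: "real \<Rightarrow> nat \<Rightarrow> (real \<Rightarrow> real) \<Rightarrow> real \<Rightarrow> real" where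
  "Dd h 0 G x = G x"
| "Dd h (Suc s) G x = Dd h s G (x + h) - Dd h s G x"

lemma Dd_deriv: "(\<And>x. DERIV G x :> G' x) \<Longrightarrow> DERIV (Dd h s G) x :> Dd h s G' x"
proof (induction s arbitrary: x)
  case 0 then show ?case by simp
next
  case (Suc s)
  have 1: "DERIV (\<lambda>y. Dd h s G (y + h)) x :> Dd h s G' (x + h)"
    using Suc DERIV_shift[of "Dd h s G" "Dd h s G' (x + h)" x h] by simp
  have 2: "DERIV (Dd h s G) x :> Dd h s G' x" using Suc by simp
  have "DERIV (\<lambda>y. Dd h s G (y + h) - Dd h s G y) x :> Dd h s G' (x + h) - Dd h s G' x"
    by (rule derivative_intros 1 2)+
  then show ?case by simp
qed

lemma Dd_bound:
  assumes "\<forall>k x. DERIV ((deriv ^^ k) G) x :> (deriv ^^ Suc k) G x"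
    and "\<forall>y. \<bar>(deriv ^^ s) G y\<bar> \<le> M" and "h \<ge> 0"
  shows "\<bar>Dd h s G x\<bar> \<le> h ^ s * M"
  using assms(1,2)
proof (induction s arbitrary: G x M)
  case 0 then show ?case by simp
next
  case (Suc s)
  define G' where "G' = deriv G"
  have fs: "\<And>k. (deriv ^^ Suc k) G = (deriv ^^ k) G'"
    unfolding G'_def by (metis comp_apply funpow_Suc_right)
  have h1: "\<forall>k x. DERIV ((deriv ^^ k) G') x :> (deriv ^^ Suc k) G' x"
    using Suc.prems(1) by (metis fs)
  have h2: "\<forall>y. \<bar>(deriv ^^ s) G' y\<bar> \<le> M" using Suc.prems(2) fs by metis
  have IH: "\<And>z. \<bar>Dd h s G' z\<bar> \<le> h ^ s * M" using Suc.IH[OF h1 h2] .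
  have dG: "\<And>y. DERIV G y :> G' y" using Suc.prems(1)[rule_format, of 0] unfolding G'_def by simp
  have dD: "\<And>y. DERIV (Dd h s G) y :> Dd h s G' y" by (rule Dd_deriv[OF dG])
  show ?case
  proof (cases "h = 0")
    case True then show ?thesis by simp
  next
    case False
    then have hp: "0 < h" using assms(3) by simp
    obtain z where z: "Dd h s G (x + h) - Dd h s G x = (x + h - x) * Dd h s G' z"
      using MVT2[of x "x + h" "Dd h s G" "Dd h s G'"] hp dD by auto
    have "\<bar>Dd h (Suc s) G x\<bar> = h * \<bar>Dd h s G' z\<bar>" using z hp by (simp add: abs_mult)
    also have "\<dots> \<le> h * (h ^ s * M)" using IH hp by (intro mult_left_mono) auto
    finally show ?thesis by simp
  qed
qed

lemma periodic_int:
  assumes "\<forall>x. A (x + L) = A (x::real)"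
  shows "A (x + real_of_int k * L) = A x"
proof -
  have n: "A (y + real n * L) = A y" for y n
    by (induction n) (auto simp: algebra_simps assms[rule_format, of "y + real _ * L", simplified algebra_simps])
  show ?thesis
  proof (cases "k \<ge> 0")
    case True then show ?thesis using n[of x "nat k"] by simp
  next
    case False
    then have e: "(x + real_of_int k * L) + real (nat (- k)) * L = x" by (simp add: algebra_simps)
    show ?thesis using n[of "x + real_of_int k * L" "nat (-k)"] unfolding e by simp
  qed
qed

lemma deriv_periodic:
  assumes "\<forall>x. A (x + L) = A (x::real)" and "\<forall>x. A differentiable (at x)"
  shows "\<forall>x. deriv A (x + L) = deriv A x"
proof
  fix x
  have "DERIV A (x + L) :> deriv A (x + L)"
    using assms(2) DERIV_deriv_iff_real_differentiable by blast
  then have "DERIV (\<lambda>y. A (y + L)) x :> deriv A (x + L)" using DERIV_shift by blast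
  moreover have "(\<lambda>y. A (y + L)) = A" using assms(1) by auto
  ultimately show "deriv A (x + L) = deriv A x" using DERIV_imp_deriv by metis
qed

lemma periodic_bounded:
  fixes A :: "real \<Rightarrow> real"
  assumes "\<forall>x. A (x + L) = A (x::real)" and "\<forall>x. isCont A x" and "L > 0"
  shows "\<exists>M. \<forall>y. \<bar>A y\<bar> \<le> M"
proof -
  obtain M where M: "\<forall>x. 0 \<le> x \<and> x \<le> L \<longrightarrow> \<bar>A x\<bar> \<le> M"
    using isCont_bounded[where a=0 and b=L and f="\<lambda>x. \<bar>A x\<bar>"] assms(2,3) by (auto intro: continuous_intros)
  have "\<bar>A y\<bar> \<le> M" for y
  proof -
    define k where "k = \<lfloor>y / L\<rfloor>"
    have k1: "real_of_int k \<le> y / L" "y / L < real_of_int k + 1" unfolding k_def by linarith+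
    have "real_of_int k * L \<le> y" "y < real_of_int k * L + L"
      using k1 assms(3) by (auto simp: field_simps)
    then have "0 \<le> y + real_of_int (-k) * L" "y + real_of_int (-k) * L \<le> L" by auto
    then have "\<bar>A (y + real_of_int (-k) * L)\<bar> \<le> M" using M by blast
    then show ?thesis using periodic_int[OF assms(1)] by metis
  qed
  then show ?thesis by blast
qed

lemma nablas_sample:
  "(nabla_plus ^^ s) (\<lambda>i. G (real_of_int (i - 1) * h)) i = Dd h s G (real_of_int (i - 1) * h)"
proof (induction s arbitrary: i)
  case 0 then show ?case by simp
next
  case (Suc s)
  have "real_of_int (i + 1 - 1) * h = real_of_int (i - 1) * h + h" by (simp add: algebra_simps)
  then show ?case using Suc by (simp add: nabla_plus_def)
qed

lemma xpt_periodic: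
  assumes "\<forall>x. A (x + L) = A (x::real)" and "N \<ge> 1"
  shows "A (xpt L N i) = A (real_of_int (i - 1) * (L / real N))"
proof -
  define q where "q = (i - 1) div int N"
  have "(i - 1) mod int N = (i - 1) - int N * q" unfolding q_def by (simp add: minus_div_mult_eq_mod[symmetric] algebra_simps)
  then have "real_of_int ((i - 1) mod int N) = real_of_int (i - 1) - real N * real_of_int q"
    by simp
  then have "xpt L N i = (real_of_int (i - 1) - real N * real_of_int q) * (L / real N)"
    unfolding xpt_def by simp
  also have "\<dots> = real_of_int (i - 1) * (L / real N) + real_of_int (-q) * L"
    using assms(2) by (simp add: field_simps)
  finally have "xpt L N i = real_of_int (i - 1) * (L / real N) + real_of_int (-q) * L" .
  then show ?thesis using periodic_int[OF assms(1)] by metis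
qed

lemma Good_sample:
  assumes L: "L > 0" and per: "\<forall>x. G (x + L) = G x"
    and sm: "\<forall>k x. ((deriv ^^ k) G) differentiable (at x)"
  shows "Good 0 (\<lambda>N i. G (xpt L N i))"
  unfolding Good_def Bd_def
proof
  fix s
  have hd: "\<forall>k x. DERIV ((deriv ^^ k) G) x :> (deriv ^^ Suc k) G x"
    using sm DERIV_deriv_iff_real_differentiable by simp
  have perk: "\<forall>x. (deriv ^^ k) G (x + L) = (deriv ^^ k) G x" for k
  proof (induction k)
    case 0 then show ?case using per by simp
  next
    case (Suc k) then show ?case using deriv_periodic[of "(deriv ^^ k) G" L] sm by simp
  qed
  have "\<forall>x. isCont ((deriv ^^ s) G) x" using sm differentiable_imp_continuous_within by blast
  then obtain M where M: "\<forall>y. \<bar>(deriv ^^ s) G y\<bar> \<le> M" using periodic_bounded[OF perk[of s] _ L] by blast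
  have "\<forall>N\<ge>1. \<forall>i. \<bar>(nabla_plus ^^ s) (\<lambda>i. G (xpt L N i)) i\<bar> \<le> (L ^ s * M) * real N powr (0 - real s)"
  proof (intro allI impI)
    fix N :: nat and i assume N: "1 \<le> N"
    have eq: "(\<lambda>i. G (xpt L N i)) = (\<lambda>i. G (real_of_int (i - 1) * (L / real N)))"
      using xpt_periodic[OF per N] by auto
    have "\<bar>(nabla_plus ^^ s) (\<lambda>i. G (xpt L N i)) i\<bar> = \<bar>Dd (L / real N) s G (real_of_int (i - 1) * (L / real N))\<bar>"
      unfolding eq nablas_sample ..
    also have "\<dots> \<le> (L / real N) ^ s * M" using Dd_bound[OF hd M] L by simp
    also have "\<dots> = (L ^ s * M) * real N powr (0 - real s)"
      using N by (simp add: powr_minus powr_realpow power_divide divide_simps)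
    finally show "\<bar>(nabla_plus ^^ s) (\<lambda>i. G (xpt L N i)) i\<bar> \<le> (L ^ s * M) * real N powr (0 - real s)" .
  qed
  then show "\<exists>C. \<forall>N\<ge>1. \<forall>i. \<bar>(nabla_plus ^^ s) (\<lambda>i. G (xpt L N i)) i\<bar> \<le> C * real N powr (0 - real s)" by blast
qed



lemma derivs_periodic:
  assumes "\<forall>x. G (x + L) = G (x::real)" "\<forall>k x. ((deriv ^^ k) G) differentiable (at x)"
  shows "\<forall>x. (deriv ^^ k) G (x + L) = (deriv ^^ k) G x"
proof (induction k)
  case 0 then show ?case using assms by simp
next
  case (Suc k) then show ?case using deriv_periodic[of "(deriv ^^ k) G" L] assms by simp
qed

lemma Good_sample_deriv:
  assumes L: "L > 0" and per: "\<forall>x. F (x + L) = F x" and sm: "smooth_real F"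
  shows "Good 0 (\<lambda>N i. (deriv ^^ k) F (xpt L N i))"
proof (rule Good_sample[OF L])
  have sm': "\<forall>k x. ((deriv ^^ k) F) differentiable (at x)" using sm unfolding smooth_real_def by blast
  show "\<forall>x. (deriv ^^ k) F (x + L) = (deriv ^^ k) F x" using derivs_periodic[OF per sm'] by blast
  show "\<forall>k' x. (deriv ^^ k') ((deriv ^^ k) F) differentiable at x"
    using sm' by (metis comp_apply funpow_add)
qed

definition col :: "(real \<Rightarrow> real) \<Rightarrow> real \<Rightarrow> nat \<Rightarrow> nat \<Rightarrow> int \<Rightarrow> real" where
  "col F L j N = ctab F L N (Suc j) j"

lemma ctab_col: "j' < n \<Longrightarrow> ctab F L N n j' = col F L j' N"
proof (induction n)
  case 0 then show ?case by simp
next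
  case (Suc n) then show ?case unfolding col_def by (cases "j' = n") auto
qed

definition T1 where
  "T1 F L j m js N i = dcoef m / real j * (L / real N) powi (- 2 - int m) *
            nabla_minus (\<lambda>i'. \<Prod>p<m. nabla_plus (col F L (js ! p) N) i' / (real (js ! p) + 1)) i"

definition T2 where
  "T2 F L j k js N i = 1 / (real j * fact k) * (deriv ^^ k) F (xpt L N i) *
            (\<Prod>p<k. col F L (js ! p) N i / (real (js ! p) + 1))"

lemma tuples_lt: "js \<in> tuples m s \<Longrightarrow> p < m \<Longrightarrow> js ! p \<le> s \<and> 0 < js ! p"
  unfolding tuples_def using member_le_sum_list[of "js ! p" js] by auto

lemma tuples_sum: "js \<in> tuples m s \<Longrightarrow> (\<Sum>p<m. real (js ! p)) = real s"
proof -
  assume "js \<in> tuples m s"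
  then have "length js = m" "sum_list js = s" unfolding tuples_def by auto
  then have "(\<Sum>p<m. js ! p) = s" using sum_list_sum_nth[of js] by (simp add: atLeast0LessThan)
  then show ?thesis by (metis of_nat_sum)
qed

lemma col_rec:
  assumes "j \<ge> 3"
  shows "col F L j N i = - (\<Sum>m = 1..(j - 1) div 2. \<Sum>js \<in> tuples m (j - m - 1). T1 F L j m js N i)
       + (\<Sum>k = 1..(j - 1) div 2. \<Sum>js \<in> tuples k (j - k - 1). T2 F L j k js N i)" (is "_ = ?rhs")
proof -
  have key: "ctab F L N j (js ! p) = col F L (js ! p) N" if "js \<in> tuples m (j - m - 1)" "p < m" for m js p
    using tuples_lt[OF that] assms by (intro ctab_col) auto
  have key3: "ctab F L N j (js ! p) = col F L (js ! p) N" if "p < length js" "sum_list js < j" for js p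
    using that member_le_sum_list[of "js ! p" js] by (intro ctab_col) auto
  have "col F L j N i = cstep F L N j (ctab F L N j) i" unfolding col_def by simp
  also have "\<dots> = ?rhs"
    using assms unfolding cstep_def T1_def T2_def by (simp add: key3 tuples_def)
  finally show ?thesis .
qed


lemma Good_cdiv: "Good a g \<Longrightarrow> Good a (\<lambda>N i. g N i / c)"
proof -
  assume "Good a g"
  then have "Good a (\<lambda>N i. (1 / c) * g N i)" by (rule Good_cscale)
  then show ?thesis by simp
qed

lemma Good_neg: "Good a g \<Longrightarrow> Good a (\<lambda>N i. - g N i)"
proof -
  assume "Good a g"
  then have "Good a (\<lambda>N i. (-1) * g N i)" by (rule Good_cscale)
  then show ?thesis by simp
qed

lemma powi_bound:
  assumes L: "L > 0"
  shows "\<forall>N\<ge>1. \<bar>c * (L / real N) powi (- 2 - int m)\<bar> \<le> (\<bar>c\<bar> / L ^ (m + 2)) * real N powr real (m + 2)"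
proof (intro allI impI)
  fix N :: nat assume N: "1 \<le> N"
  have "(L / real N) powi (- 2 - int m) = (L / real N) powi (- int (m + 2))" by simp
  also have "\<dots> = inverse ((L / real N) ^ (m + 2))" by (simp only: power_int_minus power_int_of_nat)
  also have "\<dots> = real N ^ (m + 2) / L ^ (m + 2)" by (simp add: power_divide)
  finally have e: "(L / real N) powi (- 2 - int m) = real N ^ (m + 2) / L ^ (m + 2)" .
  have "real N powr real (m + 2) = real N ^ (m + 2)" using N by (intro powr_realpow) simp
  then show "\<bar>c * (L / real N) powi (- 2 - int m)\<bar> \<le> (\<bar>c\<bar> / L ^ (m + 2)) * real N powr real (m + 2)"
    unfolding e using L by (simp add: abs_mult)
qed

lemma Good_col:
  assumes L: "L > 0" and per: "\<forall>x. F (x + L) = F x" and sm: "smooth_real F"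
  shows "Good ((real j - 1) / 2) (col F L j)"
proof (induction j rule: less_induct)
  case (less j)
  have IH: "\<And>j'. j' < j \<Longrightarrow> Good ((real j' - 1) / 2) (col F L j')" using less by blast
  consider "j = 0" | "j = 1" | "j = 2" | "j \<ge> 3" by linarith
  then show ?case
  proof cases
    case 1
    then have "col F L j = (\<lambda>N i. 0)" unfolding col_def ctab.simps(2) by (auto simp: fun_eq_iff cstep_def)
    then show ?thesis using Good_zero by simp
  next
    case 2
    then have "col F L j = (\<lambda>N i. (deriv ^^ 0) F (xpt L N i))" unfolding col_def ctab.simps(2) by (auto simp: fun_eq_iff cstep_def)
    then show ?thesis using Good_sample_deriv[OF L per sm, of 0] 2 by simp
  next
    case 3
    then have "col F L j = (\<lambda>N i. 0)" unfolding col_def ctab.simps(2) by (auto simp: fun_eq_iff cstep_def)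
    then show ?thesis using Good_zero by simp
  next
    case 4
    have G1: "Good ((real j - 1) / 2) (T1 F L j m js)"
      if m: "m \<in> {1..(j - 1) div 2}" and js: "js \<in> tuples m (j - m - 1)" for m js
    proof -
      have mj: "m \<ge> 1" "2 * m \<le> j - 1" using m by auto
      have lt: "js ! p < j" if "p < m" for p using tuples_lt[OF js that] mj by auto
      have A: "Good ((real (js ! p) - 1) / 2 - 1) (\<lambda>N i. nabla_plus (col F L (js ! p) N) i / (real (js ! p) + 1))"
        if "p < m" for p
        using Good_cdiv[OF Good_nabla[OF IH[OF lt[OF that]]]] by simp
      have B: "Good (\<Sum>p<m. (real (js ! p) - 1) / 2 - 1) (\<lambda>N i. \<Prod>p<m. nabla_plus (col F L (js ! p) N) i / (real (js ! p) + 1))"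
        by (rule Good_prod) (rule A)
      have C: "Good ((\<Sum>p<m. (real (js ! p) - 1) / 2 - 1) - 1 + real (m + 2)) (T1 F L j m js)"
        using Good_scale[OF powi_bound[OF L, of "dcoef m / real j" m] Good_nabla_minus[OF B]]
        unfolding T1_def[abs_def] by simp
      have "(\<Sum>p<m. (real (js ! p) - 1) / 2 - 1) = (\<Sum>p<m. real (js ! p) / 2 - 3 / 2)"
        by (rule sum.cong) (auto simp: field_simps)
      also have "\<dots> = real (j - m - 1) / 2 - 3 / 2 * real m"
        by (simp add: sum_subtractf sum_divide_distrib[symmetric] tuples_sum[OF js])
      finally have eq: "(\<Sum>p<m. (real (js ! p) - 1) / 2 - 1) = real (j - m - 1) / 2 - 3 / 2 * real m" .
      have r: "real m \<ge> 1" "real (j - m - 1) = real j - real m - 1" "real (m + 2) = real m + 2" using mj by auto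
      have "(\<Sum>p<m. (real (js ! p) - 1) / 2 - 1) - 1 + real (m + 2) \<le> (real j - 1) / 2"
        unfolding eq using r by (simp add: field_simps)
      then show ?thesis using C Good_mono by blast
    qed
    have G2: "Good ((real j - 1) / 2) (T2 F L j k js)"
      if k: "k \<in> {1..(j - 1) div 2}" and js: "js \<in> tuples k (j - k - 1)" for k js
    proof -
      have kj: "k \<ge> 1" "2 * k \<le> j - 1" using k by auto
      have lt: "js ! p < j" if "p < k" for p using tuples_lt[OF js that] kj by auto
      have A: "Good ((real (js ! p) - 1) / 2) (\<lambda>N i. col F L (js ! p) N i / (real (js ! p) + 1))"
        if "p < k" for p
        using Good_cdiv[OF IH[OF lt[OF that]]] by simp
      have B: "Good (\<Sum>p<k. (real (js ! p) - 1) / 2) (\<lambda>N i. \<Prod>p<k. col F L (js ! p) N i / (real (js ! p) + 1))"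
        by (rule Good_prod) (rule A)
      have D: "Good 0 (\<lambda>N i. 1 / (real j * fact k) * (deriv ^^ k) F (xpt L N i))"
        by (rule Good_cscale[OF Good_sample_deriv[OF L per sm]])
      have C: "Good (0 + (\<Sum>p<k. (real (js ! p) - 1) / 2)) (T2 F L j k js)"
        using Good_mult[OF D B] unfolding T2_def[abs_def] by simp
      have "(\<Sum>p<k. (real (js ! p) - 1) / 2) = (\<Sum>p<k. real (js ! p) / 2 - 1 / 2)"
        by (rule sum.cong) (auto simp: field_simps)
      also have "\<dots> = real (j - k - 1) / 2 - 1 / 2 * real k"
        by (simp add: sum_subtractf sum_divide_distrib[symmetric] tuples_sum[OF js])
      finally have eq: "(\<Sum>p<k. (real (js ! p) - 1) / 2) = real (j - k - 1) / 2 - 1 / 2 * real k" .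
      have r: "real k \<ge> 1" "real (j - k - 1) = real j - real k - 1" using kj by auto
      have "0 + (\<Sum>p<k. (real (js ! p) - 1) / 2) \<le> (real j - 1) / 2"
        unfolding eq using r by (simp add: field_simps)
      then show ?thesis using C Good_mono by blast
    qed
    have "Good ((real j - 1) / 2) (\<lambda>N i. - (\<Sum>m = 1..(j - 1) div 2. \<Sum>js \<in> tuples m (j - m - 1). T1 F L j m js N i)
       + (\<Sum>k = 1..(j - 1) div 2. \<Sum>js \<in> tuples k (j - k - 1). T2 F L j k js N i))"
      by (intro Good_add Good_neg Good_sum G1 G2)
    moreover have "col F L j = (\<lambda>N i. - (\<Sum>m = 1..(j - 1) div 2. \<Sum>js \<in> tuples m (j - m - 1). T1 F L j m js N i)
       + (\<Sum>k = 1..(j - 1) div 2. \<Sum>js \<in> tuples k (j - k - 1). T2 F L j k js N i))"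
      using col_rec[OF 4] by (intro ext) blast
    ultimately show ?thesis by simp
  qed
qed

lemma limsup_bound:
  fixes c :: "nat \<Rightarrow> real"
  assumes "\<forall>N\<ge>1. \<bar>c N\<bar> \<le> C * real N powr a" "a \<ge> 0"
  shows "limsup (\<lambda>N. ereal (ln \<bar>c N\<bar> / ln (real N))) \<le> ereal a"
proof -
  define C' where "C' = max C 1"
  have C'1: "C' \<ge> 1" unfolding C'_def by simp
  have ev: "eventually (\<lambda>N. ereal (ln \<bar>c N\<bar> / ln (real N)) \<le> ereal (ln C' / ln (real N) + a)) sequentially"
    using eventually_ge_at_top[of 2]
  proof eventually_elim
    case (elim N)
    have lnN: "ln (real N) > 0" using elim by simp
    have "ln \<bar>c N\<bar> \<le> ln C' + a * ln (real N)"
    proof (cases "c N = 0")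
      case True
      then show ?thesis using C'1 lnN assms(2) by simp
    next
      case False
      have "\<bar>c N\<bar> \<le> C * real N powr a" using assms(1) elim by simp
      also have "\<dots> \<le> C' * real N powr a" unfolding C'_def by (intro mult_right_mono) auto
      finally have "ln \<bar>c N\<bar> \<le> ln (C' * real N powr a)" using False by simp
      also have "\<dots> = ln C' + a * ln (real N)" using C'1 elim by (simp add: ln_mult ln_powr)
      finally show ?thesis .
    qed
    then have "ln \<bar>c N\<bar> / ln (real N) \<le> (ln C' + a * ln (real N)) / ln (real N)"
      using lnN by (intro divide_right_mono) auto
    also have "\<dots> = ln C' / ln (real N) + a" using lnN by (simp add: field_simps)
    finally show ?case by simp
  qed
  have "((\<lambda>N. ln C' / ln (real N)) \<longlongrightarrow> 0) sequentially"
    by (intro tendsto_divide_0[OF tendsto_const] filterlim_at_top_imp_at_infinity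
        filterlim_compose[OF ln_at_top filterlim_real_sequentially])
  then have "((\<lambda>N. ereal (ln C' / ln (real N) + a)) \<longlongrightarrow> ereal (0 + a)) sequentially"
    by (intro tendsto_ereal tendsto_add tendsto_const)
  then have "limsup (\<lambda>N. ereal (ln C' / ln (real N) + a)) = ereal a"
    by (intro lim_imp_Limsup) auto
  with Limsup_mono[OF ev] show ?thesis by simp
qed

theorem mainTheorem6:
  fixes F :: "real \<Rightarrow> real" and L :: real and i :: int and j :: nat
  assumes "L > 0"
    and "\<forall>x. F (x + L) = F x"
    and "smooth_real F"
    and "i \<ge> 1" and "j \<ge> 1"
  shows "limsup (\<lambda>N. ereal (ln \<bar>ccoef F L N i j\<bar> / ln (real N)))
           \<le> ereal ((real j - 1) / 2)"
proof -
  have "Good ((real j - 1) / 2) (col F L j)" using Good_col assms(1-3) by blast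
  then obtain C where C: "\<forall>N\<ge>1. \<forall>i. \<bar>col F L j N i\<bar> \<le> C * real N powr ((real j - 1) / 2 - 0)"
    unfolding Good_def Bd_def by (metis funpow_0 of_nat_0)
  have "\<forall>N\<ge>1. \<bar>ccoef F L N i j\<bar> \<le> C * real N powr ((real j - 1) / 2)"
    using C by (simp add: ccoef_def col_def)
  then show ?thesis using limsup_bound assms(5) by simp
qed


end
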